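(* Let $V$ be a real-analytic function on $\mathbb{T}^d$ extending analytically to $\mathbb{T}^d_\rho$, $0<\rho\le1$. Let $x_0\ne x_1$ be critical points of $V$, with $x_0$ non-degenerate. Then $$\|x_0-x_1\|\ge c_\rho\|\mathfrak{H}(x_0)^{-1}\|^{-1}(1+\|V\|_\infty)^{-1},$$ where $\mathfrak{H}$ is the Hessian of $V$ and $c_\rho>0$ depends only on $\rho$ (and $d$).
   Context: $\mathbb{T}=\mathbb{R}/\mathbb{Z}$; $\mathbb{T}^d_\rho=\{x+iy:x\in\mathbb{T}^d,y\in\mathbb{R}^d,|y|<\rho\}$; $\|V\|_\infty=\sup\{|V(z)|:z\in\mathbb{T}^d_{3\rho/4}\}$; $\|\cdot\|$ is the Euclidean norm on the torus. *)

theory Defs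
  imports "HOL-Analysis.Analysis"
begin

definition cvec :: "real^'n \<Rightarrow> complex^'n" where
  "cvec x = (\<chi> i. complex_of_real (x $ i))"

text \<open>The complex strip T^d_rho, lifted to C^d: all imaginary parts of modulus < rho.\<close>
definition strip :: "real \<Rightarrow> (complex^'n) set" where
  "strip r = {z. \<forall>i. \<bar>Im (z $ i)\<bar> < r}"

definition holo_on :: "(complex^'n \<Rightarrow> complex) \<Rightarrow> (complex^'n) set \<Rightarrow> bool" where
  "holo_on F S \<longleftrightarrow> (\<forall>z\<in>S. \<exists>L. (F has_derivative L) (at z) \<and>
       (\<forall>h. L (\<chi> j. \<i> * h $ j) = \<i> * L h))"

definition supnorm :: "(complex^'n \<Rightarrow> complex) \<Rightarrow> real \<Rightarrow> real" where
  "supnorm F r = (SUP z\<in>strip (3 * r / 4). cmod (F z))"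

definition periodic1 :: "(real^'n \<Rightarrow> real) \<Rightarrow> bool" where
  "periodic1 f \<longleftrightarrow> (\<forall>x k. (\<forall>i. k $ i \<in> \<int>) \<longrightarrow> f (x + k) = f x)"

definition torus_dist :: "real^'n \<Rightarrow> real^'n \<Rightarrow> real" where
  "torus_dist x y = Inf {norm (x - y - k) | k. \<forall>i. k $ i \<in> \<int>}"

definition partial :: "(real^'n \<Rightarrow> real) \<Rightarrow> 'n \<Rightarrow> real^'n \<Rightarrow> real" where
  "partial f i x = deriv (\<lambda>t. f (x + t *\<^sub>R axis i 1)) 0"

definition hessian :: "(real^'n \<Rightarrow> real) \<Rightarrow> real^'n \<Rightarrow> real^'n^'n" where
  "hessian f x = (\<chi> i j. partial (partial f j) i x)"

definition critical_point :: "(real^'n \<Rightarrow> real) \<Rightarrow> real^'n \<Rightarrow> bool" where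
  "critical_point f x \<longleftrightarrow> (f has_derivative (\<lambda>h. 0)) (at x)"

end

theory Submission
  imports Defs "HOL-Complex_Analysis.Complex_Analysis"
begin

lemma cont_slice1:
  assumes "continuous_on (A \<times> B) (\<lambda>(t,s). G t s)" "s \<in> B"
  shows "continuous_on A (\<lambda>t. G t s)"
proof -
  have "continuous_on A ((\<lambda>(t,s). G t s) \<circ> (\<lambda>t. (t,s)))"
    by (rule continuous_on_compose) (auto intro!: continuous_intros continuous_on_subset[OF assms(1)] simp: assms(2))
  then show ?thesis by (simp add: o_def)
qed

lemma cont_slice2:
  assumes "continuous_on (A \<times> B) (\<lambda>(t,s). G t s)" "t \<in> A"
  shows "continuous_on B (\<lambda>s. G t s)"
proof -
  have "continuous_on B ((\<lambda>(t,s). G t s) \<circ> (\<lambda>s. (t,s)))"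
    by (rule continuous_on_compose) (auto intro!: continuous_intros continuous_on_subset[OF assms(1)] simp: assms(2))
  then show ?thesis by (simp add: o_def)
qed

lemma deriv_formula:
  fixes f :: "complex \<Rightarrow> complex"
  assumes "continuous_on (cball 0 R) f" "f holomorphic_on ball 0 R" "0 < R"
  shows "deriv f 0 = 1 / (2 * of_real pi * \<i>) * contour_integral (circlepath 0 R) (\<lambda>u. f u / u^2)"
proof -
  have "(f has_field_derivative (1 / (2 * of_real pi * \<i>) * contour_integral(circlepath 0 R) (\<lambda>u. f u / (u-0)^2))) (at 0)"
    by (rule Cauchy_derivative_integral_circlepath(2)) (use assms in auto)
  then show ?thesis by (simp add: DERIV_imp_deriv)
qed

lemma mixed_half:
  fixes G :: "complex \<Rightarrow> complex \<Rightarrow> complex"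
  assumes R: "0 < R"
  and contG: "continuous_on (cball 0 R \<times> cball 0 R) (\<lambda>(t,s). G t s)"
  and holT: "\<And>s. s \<in> cball 0 R \<Longrightarrow> (\<lambda>t. G t s) holomorphic_on ball 0 R"
  and holS: "\<And>t. t \<in> cball 0 R \<Longrightarrow> (\<lambda>s. G t s) holomorphic_on ball 0 R"
  shows "(\<lambda>s. deriv (\<lambda>t. G t s) 0) holomorphic_on ball 0 R"
    and "deriv (\<lambda>s. deriv (\<lambda>t. G t s) 0) 0 = (1 / (2 * of_real pi * \<i>))^2 *
      contour_integral (circlepath 0 R) (\<lambda>\<sigma>. contour_integral (circlepath 0 R) (\<lambda>\<tau>. G \<tau> \<sigma> / \<tau>^2) / \<sigma>^2)"
proof -
  define c where "c = 1 / (2 * of_real pi * \<i>)"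
  define \<gamma> where "\<gamma> = circlepath (0::complex) R"
  define \<Psi> where "\<Psi> = (\<lambda>s. deriv (\<lambda>t. G t s) 0)"
  have pim: "path_image \<gamma> = sphere 0 R" using R by (simp add: \<gamma>_def path_image_circlepath)
  have pimc: "path_image \<gamma> \<subseteq> cball 0 R" unfolding pim by auto
  have Psi_eq: "\<Psi> s = c * contour_integral \<gamma> (\<lambda>\<tau>. G \<tau> s / \<tau>^2)" if "s \<in> cball 0 R" for s
    unfolding \<Psi>_def c_def \<gamma>_def
    by (rule deriv_formula[OF cont_slice1[OF contG that] holT[OF that] R])
  have c0: "c \<noteq> 0" by (simp add: c_def)
  have contPsi: "continuous_on (cball 0 R) \<Psi>"
  proof -
    have "continuous_on (cball 0 R) (\<lambda>s. c * integral (cbox 0 1) (\<lambda>x. G (\<gamma> x) s / (\<gamma> x)^2 * vector_derivative \<gamma> (at x)))"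
    proof (intro continuous_intros integral_continuous_on_param)
      have gc: "continuous_on (cbox 0 1) \<gamma>" unfolding \<gamma>_def
        by (metis cbox_interval path_circlepath path_def)
      have gs: "continuous_on (cball 0 R \<times> cbox 0 1) (\<lambda>p. \<gamma> (snd p))"
        by (rule continuous_on_compose2[OF gc continuous_on_snd]) auto
      have g1: "continuous_on (cball 0 R \<times> cbox 0 1) (\<lambda>(s, x). G (\<gamma> x) s)"
      proof -
        have "continuous_on (cball 0 R \<times> cbox 0 1) ((\<lambda>(t,s). G t s) \<circ> (\<lambda>(s,x). (\<gamma> x, s)))"
        proof (rule continuous_on_compose)
          have "continuous_on (cbox 0 1) \<gamma>" unfolding \<gamma>_def
            by (metis cbox_interval path_circlepath path_def)
          then have "continuous_on (cball 0 R \<times> cbox 0 1) (\<lambda>p. \<gamma> (snd p))"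
            by (rule continuous_on_compose2[OF _ continuous_on_snd]) auto
          then show "continuous_on (cball 0 R \<times> cbox 0 1) (\<lambda>(s, x). (\<gamma> x, s))"
            unfolding split_beta by (intro continuous_on_Pair continuous_on_fst continuous_on_id)
          show "continuous_on ((\<lambda>(s, x). (\<gamma> x, s)) ` (cball 0 R \<times> cbox 0 1)) (\<lambda>(t, s). G t s)"
            apply (rule continuous_on_subset[OF contG])
            using pimc by (auto simp: path_image_def cbox_interval)
        qed
        then show ?thesis by (simp add: o_def split_beta)
      qed
      have g2: "continuous_on (cball 0 R \<times> cbox 0 1) (\<lambda>(s, x::real). (\<gamma> x)^2)"
        unfolding split_beta by (intro continuous_on_power gs)
      have g3: "continuous_on (cball 0 R \<times> cbox 0 1) (\<lambda>(s, x::real). vector_derivative \<gamma> (at x))"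
        unfolding \<gamma>_def vector_derivative_circlepath by (auto simp: split_beta intro!: continuous_intros)
      have nz: "(\<gamma> x)^2 \<noteq> 0" for x using R by (simp add: \<gamma>_def circlepath)
      show "continuous_on (cball 0 R \<times> cbox 0 1) (\<lambda>(s, x). G (\<gamma> x) s / (\<gamma> x)\<^sup>2 * vector_derivative \<gamma> (at x))"
        using continuous_on_mult[OF continuous_on_divide[OF g1 g2] g3] nz
        by (simp add: split_beta)
    qed
    then show ?thesis
      by (rule continuous_on_eq) (simp add: Psi_eq contour_integral_integral cbox_interval)
  qed
  have Psi_in: "\<Psi> w = c * contour_integral \<gamma> (\<lambda>\<sigma>. \<Psi> \<sigma> / (\<sigma> - w))" if w: "w \<in> ball 0 R" for w
  proof -
    have wn: "norm (w - 0) < R" using w by simp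
    have Gw: "G \<tau> w = c * contour_integral \<gamma> (\<lambda>\<sigma>. G \<tau> \<sigma> / (\<sigma> - w))" if "\<tau> \<in> path_image \<gamma>" for \<tau>
    proof -
      have "\<tau> \<in> cball 0 R" using that pimc by auto
      from Cauchy_integral_circlepath[OF cont_slice2[OF contG this] holS[OF this] wn]
      have "((\<lambda>\<sigma>. G \<tau> \<sigma> / (\<sigma> - w)) has_contour_integral 2 * of_real pi * \<i> * G \<tau> w) \<gamma>"
        by (simp add: \<gamma>_def)
      then show ?thesis using c0 by (simp add: contour_integral_unique c_def)
    qed
    define f where "f = (\<lambda>\<tau> \<sigma>. c * G \<tau> \<sigma> / ((\<sigma> - w) * \<tau>^2))"
    have fcon: "continuous_on (path_image \<gamma> \<times> path_image \<gamma>) (\<lambda>(y1, y2). f y1 y2)"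
    proof -
      have a: "continuous_on (path_image \<gamma> \<times> path_image \<gamma>) (\<lambda>(y1, y2). G y1 y2)"
        by (rule continuous_on_subset[OF contG]) (use pimc in auto)
      have b: "continuous_on (path_image \<gamma> \<times> path_image \<gamma>) (\<lambda>(y1, y2::complex). (y2 - w) * y1^2)"
        by (auto simp: split_beta intro!: continuous_intros)
      have nz: "(y2 - w) * y1^2 \<noteq> 0" if "y1 \<in> path_image \<gamma>" "y2 \<in> path_image \<gamma>" for y1 y2
        using that w R unfolding pim by auto
      show ?thesis using continuous_on_divide[OF continuous_on_mult[OF continuous_on_const a] b] nz
        by (simp add: split_beta f_def)
    qed
    have vp: "valid_path \<gamma>" by (simp add: \<gamma>_def)
    have vdc: "continuous_on {0..1} (\<lambda>t. vector_derivative \<gamma> (at t))"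
      unfolding \<gamma>_def vector_derivative_circlepath by (intro continuous_intros)
    have swap: "contour_integral \<gamma> (\<lambda>\<tau>. contour_integral \<gamma> (f \<tau>)) =
         contour_integral \<gamma> (\<lambda>\<sigma>. contour_integral \<gamma> (\<lambda>\<tau>. f \<tau> \<sigma>))"
      by (rule contour_integral_swap[OF fcon vp vp vdc vdc])
    have intG: "(\<lambda>\<sigma>. G \<tau> \<sigma> / (\<sigma> - w)) contour_integrable_on \<gamma>" if "\<tau> \<in> path_image \<gamma>" for \<tau>
    proof -
      have "\<tau> \<in> cball 0 R" using that pimc by auto
      from Cauchy_integral_circlepath[OF cont_slice2[OF contG this] holS[OF this] wn]
      show ?thesis unfolding \<gamma>_def using has_contour_integral_integrable by blast
    qed
    have intG2: "(\<lambda>\<tau>. G \<tau> \<sigma> / \<tau>^2) contour_integrable_on \<gamma>" if "\<sigma> \<in> path_image \<gamma>" for \<sigma>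
    proof -
      have "\<sigma> \<in> cball 0 R" using that pimc by auto
      have "(\<lambda>u. G u \<sigma> / (u - 0)^2) contour_integrable_on circlepath 0 R"
        by (rule Cauchy_derivative_integral_circlepath(1)[OF cont_slice1[OF contG \<open>\<sigma> \<in> cball 0 R\<close>] holT[OF \<open>\<sigma> \<in> cball 0 R\<close>]]) (use R in auto)
      then show ?thesis by (simp add: \<gamma>_def)
    qed
    have "\<Psi> w = c * contour_integral \<gamma> (\<lambda>\<tau>. G \<tau> w / \<tau>^2)" using Psi_eq w by auto
    also have "contour_integral \<gamma> (\<lambda>\<tau>. G \<tau> w / \<tau>^2) = contour_integral \<gamma> (\<lambda>\<tau>. contour_integral \<gamma> (f \<tau>))"
    proof (rule contour_integral_cong[OF refl])
      fix \<tau> assume t: "\<tau> \<in> path_image \<gamma>"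
      have "contour_integral \<gamma> (f \<tau>) = contour_integral \<gamma> (\<lambda>\<sigma>. G \<tau> \<sigma> / (\<sigma> - w) * (c / \<tau>^2))"
        by (rule contour_integral_cong) (auto simp: f_def)
      also have "\<dots> = contour_integral \<gamma> (\<lambda>\<sigma>. G \<tau> \<sigma> / (\<sigma> - w)) * (c / \<tau>^2)"
        by (rule contour_integral_rmul[OF intG[OF t]])
      finally show "G \<tau> w / \<tau>^2 = contour_integral \<gamma> (f \<tau>)" using Gw[OF t] by simp
    qed
    also have "\<dots> = contour_integral \<gamma> (\<lambda>\<sigma>. contour_integral \<gamma> (\<lambda>\<tau>. f \<tau> \<sigma>))" by (rule swap)
    also have "\<dots> = contour_integral \<gamma> (\<lambda>\<sigma>. \<Psi> \<sigma> / (\<sigma> - w))"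
    proof (rule contour_integral_cong[OF refl])
      fix \<sigma> assume s: "\<sigma> \<in> path_image \<gamma>"
      have "contour_integral \<gamma> (\<lambda>\<tau>. f \<tau> \<sigma>) = contour_integral \<gamma> (\<lambda>\<tau>. G \<tau> \<sigma> / \<tau>^2 * (c / (\<sigma> - w)))"
        by (rule contour_integral_cong) (auto simp: f_def mult_ac)
      also have "\<dots> = contour_integral \<gamma> (\<lambda>\<tau>. G \<tau> \<sigma> / \<tau>^2) * (c / (\<sigma> - w))"
        by (rule contour_integral_rmul[OF intG2[OF s]])
      finally show "contour_integral \<gamma> (\<lambda>\<tau>. f \<tau> \<sigma>) = \<Psi> \<sigma> / (\<sigma> - w)"
        using Psi_eq[of \<sigma>] s pimc by auto
    qed
    finally show ?thesis .
  qed
  have dPsi: "(\<Psi> has_field_derivative c * contour_integral \<gamma> (\<lambda>u. \<Psi> u / (u - w)^2)) (at w)"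
    if w: "w \<in> ball 0 R" for w
  proof -
    define g where "g = (\<lambda>w. contour_integral \<gamma> (\<lambda>\<sigma>. \<Psi> \<sigma> / (\<sigma> - w)))"
    have cpi: "continuous_on (path_image (circlepath 0 R)) \<Psi>"
      using continuous_on_subset[OF contPsi pimc] by (simp add: \<gamma>_def)
    have int: "((\<lambda>u. \<Psi> u / (u - w') ^ 1) has_contour_integral g w') (circlepath 0 R)"
      if "w' \<in> ball 0 R" for w'
    proof -
      have "continuous_on (path_image \<gamma>) (\<lambda>u. \<Psi> u / (u - w'))"
        using that continuous_on_subset[OF contPsi pimc] unfolding pim
        by (auto intro!: continuous_intros)
      then have "(\<lambda>u. \<Psi> u / (u - w')) contour_integrable_on \<gamma>"
        by (simp add: \<gamma>_def contour_integrable_continuous_circlepath)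
      then show ?thesis by (simp add: g_def \<gamma>_def has_contour_integral_integral)
    qed
    have gd: "(g has_field_derivative (of_nat 1 * contour_integral (circlepath 0 R) (\<lambda>u. \<Psi> u / (u - w) ^ Suc 1))) (at w)"
      by (rule Cauchy_next_derivative_circlepath(2)[OF cpi int _ w]) auto
    have "((\<lambda>w. c * g w) has_field_derivative c * contour_integral \<gamma> (\<lambda>u. \<Psi> u / (u - w)^2)) (at w)"
      using DERIV_cmult[OF gd, of c] by (simp add: \<gamma>_def power2_eq_square)
    then show ?thesis
      by (rule has_field_derivative_transform_within_open[OF _ open_ball w]) (simp add: Psi_in g_def)
  qed
  show "(\<lambda>s. deriv (\<lambda>t. G t s) 0) holomorphic_on ball 0 R"
    unfolding \<Psi>_def[symmetric] holomorphic_on_open[OF open_ball] using dPsi by blast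
  have "deriv \<Psi> 0 = c * contour_integral \<gamma> (\<lambda>u. \<Psi> u / (u - 0)^2)"
    by (rule DERIV_imp_deriv[OF dPsi]) (use R in simp)
  also have "contour_integral \<gamma> (\<lambda>u. \<Psi> u / (u - 0)^2) = contour_integral \<gamma> (\<lambda>\<sigma>. c * (contour_integral \<gamma> (\<lambda>\<tau>. G \<tau> \<sigma> / \<tau>^2) / \<sigma>^2))"
    by (rule contour_integral_cong[OF refl]) (use Psi_eq pimc in auto)
  also have "\<dots> = c * contour_integral \<gamma> (\<lambda>\<sigma>. contour_integral \<gamma> (\<lambda>\<tau>. G \<tau> \<sigma> / \<tau>^2) / \<sigma>^2)"
  proof (rule contour_integral_lmul)
    have "continuous_on (path_image \<gamma>) (\<lambda>\<sigma>. \<Psi> \<sigma> / \<sigma>^2 / c)"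
      using continuous_on_subset[OF contPsi pimc] R c0 unfolding pim
      by (auto intro!: continuous_intros)
    then have "(\<lambda>\<sigma>. \<Psi> \<sigma> / \<sigma>^2 / c) contour_integrable_on \<gamma>"
      by (simp add: \<gamma>_def contour_integrable_continuous_circlepath)
    then show "(\<lambda>\<sigma>. contour_integral \<gamma> (\<lambda>\<tau>. G \<tau> \<sigma> / \<tau>^2) / \<sigma>^2) contour_integrable_on \<gamma>"
      apply (rule contour_integrable_eq)
      using Psi_eq pimc c0 by auto
  qed
  finally show "deriv (\<lambda>s. deriv (\<lambda>t. G t s) 0) 0 = (1 / (2 * of_real pi * \<i>))^2 *
      contour_integral (circlepath 0 R) (\<lambda>\<sigma>. contour_integral (circlepath 0 R) (\<lambda>\<tau>. G \<tau> \<sigma> / \<tau>^2) / \<sigma>^2)"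
    by (simp add: \<Psi>_def c_def \<gamma>_def power2_eq_square)
qed


lemma mixed_partials:
  fixes G :: "complex \<Rightarrow> complex \<Rightarrow> complex"
  assumes R: "0 < R"
  and contG: "continuous_on (cball 0 R \<times> cball 0 R) (\<lambda>(t,s). G t s)"
  and holT: "\<And>s. s \<in> cball 0 R \<Longrightarrow> (\<lambda>t. G t s) holomorphic_on ball 0 R"
  and holS: "\<And>t. t \<in> cball 0 R \<Longrightarrow> (\<lambda>s. G t s) holomorphic_on ball 0 R"
  shows "(\<lambda>s. deriv (\<lambda>t. G t s) 0) holomorphic_on ball 0 R"
    and "(\<lambda>t. deriv (\<lambda>s. G t s) 0) holomorphic_on ball 0 R"
    and "deriv (\<lambda>s. deriv (\<lambda>t. G t s) 0) 0 = deriv (\<lambda>t. deriv (\<lambda>s. G t s) 0) 0"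
proof -
  have contG': "continuous_on (cball 0 R \<times> cball 0 R) (\<lambda>(s,t). G t s)"
  proof -
    have "continuous_on (cball 0 R \<times> cball 0 R) ((\<lambda>(t,s). G t s) \<circ> (\<lambda>(s,t). (t,s)))"
    proof (rule continuous_on_compose)
      show "continuous_on (cball 0 R \<times> cball 0 R) (\<lambda>(s,t). (t::complex,s::complex))"
        by (auto simp: split_beta intro!: continuous_intros)
      show "continuous_on ((\<lambda>(s,t). (t,s)) ` (cball 0 R \<times> cball 0 R)) (\<lambda>(t,s). G t s)"
        by (rule continuous_on_subset[OF contG]) auto
    qed
    then show ?thesis by (simp add: o_def split_beta)
  qed
  note A = mixed_half[of R G, OF R contG holT holS]
  note B = mixed_half[of R "\<lambda>s t. G t s", OF R contG' holS holT]
  show "(\<lambda>s. deriv (\<lambda>t. G t s) 0) holomorphic_on ball 0 R" by (rule A(1))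
  show "(\<lambda>t. deriv (\<lambda>s. G t s) 0) holomorphic_on ball 0 R" by (rule B(1))
  define \<gamma> where "\<gamma> = circlepath (0::complex) R"
  have pim: "path_image \<gamma> = sphere 0 R" using R by (simp add: \<gamma>_def path_image_circlepath)
  have pimc: "path_image \<gamma> \<subseteq> cball 0 R" unfolding pim by auto
  define f where "f = (\<lambda>\<tau> \<sigma>. G \<tau> \<sigma> / (\<tau>^2 * \<sigma>^2))"
  have fcon: "continuous_on (path_image \<gamma> \<times> path_image \<gamma>) (\<lambda>(y1, y2). f y1 y2)"
  proof -
    have a: "continuous_on (path_image \<gamma> \<times> path_image \<gamma>) (\<lambda>(y1, y2). G y1 y2)"
      by (rule continuous_on_subset[OF contG]) (use pimc in auto)
    have b: "continuous_on (path_image \<gamma> \<times> path_image \<gamma>) (\<lambda>(y1, y2::complex). y1^2 * y2^2)"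
      by (auto simp: split_beta intro!: continuous_intros)
    have nz: "y1^2 * y2^2 \<noteq> 0" if "y1 \<in> path_image \<gamma>" "y2 \<in> path_image \<gamma>" for y1 y2
      using that R unfolding pim by auto
    show ?thesis using continuous_on_divide[OF a b] nz
      by (simp add: split_beta f_def)
  qed
  have vp: "valid_path \<gamma>" by (simp add: \<gamma>_def)
  have vdc: "continuous_on {0..1} (\<lambda>t. vector_derivative \<gamma> (at t))"
    unfolding \<gamma>_def vector_derivative_circlepath by (intro continuous_intros)
  have swap: "contour_integral \<gamma> (\<lambda>\<tau>. contour_integral \<gamma> (f \<tau>)) =
       contour_integral \<gamma> (\<lambda>\<sigma>. contour_integral \<gamma> (\<lambda>\<tau>. f \<tau> \<sigma>))"
    by (rule contour_integral_swap[OF fcon vp vp vdc vdc])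
  have intT: "(\<lambda>\<tau>. G \<tau> \<sigma> / \<tau>^2) contour_integrable_on \<gamma>" if "\<sigma> \<in> path_image \<gamma>" for \<sigma>
  proof -
    have s: "\<sigma> \<in> cball 0 R" using that pimc by auto
    have "(\<lambda>u. G u \<sigma> / (u - 0)^2) contour_integrable_on circlepath 0 R"
      by (rule Cauchy_derivative_integral_circlepath(1)[OF cont_slice1[OF contG s] holT[OF s]]) (use R in auto)
    then show ?thesis by (simp add: \<gamma>_def)
  qed
  have intS: "(\<lambda>\<sigma>. G \<tau> \<sigma> / \<sigma>^2) contour_integrable_on \<gamma>" if "\<tau> \<in> path_image \<gamma>" for \<tau>
  proof -
    have s: "\<tau> \<in> cball 0 R" using that pimc by auto
    have "(\<lambda>u. G \<tau> u / (u - 0)^2) contour_integrable_on circlepath 0 R"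
      by (rule Cauchy_derivative_integral_circlepath(1)[OF cont_slice2[OF contG s] holS[OF s]]) (use R in auto)
    then show ?thesis by (simp add: \<gamma>_def)
  qed
  have e1: "contour_integral \<gamma> (\<lambda>\<sigma>. contour_integral \<gamma> (\<lambda>\<tau>. G \<tau> \<sigma> / \<tau>^2) / \<sigma>^2)
      = contour_integral \<gamma> (\<lambda>\<sigma>. contour_integral \<gamma> (\<lambda>\<tau>. f \<tau> \<sigma>))"
  proof (rule contour_integral_cong[OF refl])
    fix \<sigma> assume s: "\<sigma> \<in> path_image \<gamma>"
    have "contour_integral \<gamma> (\<lambda>\<tau>. f \<tau> \<sigma>) = contour_integral \<gamma> (\<lambda>\<tau>. G \<tau> \<sigma> / \<tau>^2 / \<sigma>^2)"
      by (rule contour_integral_cong) (auto simp: f_def)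
    also have "\<dots> = contour_integral \<gamma> (\<lambda>\<tau>. G \<tau> \<sigma> / \<tau>^2) / \<sigma>^2"
      by (rule contour_integral_div[OF intT[OF s]])
    finally show "contour_integral \<gamma> (\<lambda>\<tau>. G \<tau> \<sigma> / \<tau>^2) / \<sigma>^2 = contour_integral \<gamma> (\<lambda>\<tau>. f \<tau> \<sigma>)" by simp
  qed
  have e2: "contour_integral \<gamma> (\<lambda>\<tau>. contour_integral \<gamma> (\<lambda>\<sigma>. G \<tau> \<sigma> / \<sigma>^2) / \<tau>^2)
      = contour_integral \<gamma> (\<lambda>\<tau>. contour_integral \<gamma> (f \<tau>))"
  proof (rule contour_integral_cong[OF refl])
    fix \<tau> assume s: "\<tau> \<in> path_image \<gamma>"
    have "contour_integral \<gamma> (f \<tau>) = contour_integral \<gamma> (\<lambda>\<sigma>. G \<tau> \<sigma> / \<sigma>^2 / \<tau>^2)"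
      by (rule contour_integral_cong) (auto simp: f_def mult_ac)
    also have "\<dots> = contour_integral \<gamma> (\<lambda>\<sigma>. G \<tau> \<sigma> / \<sigma>^2) / \<tau>^2"
      by (rule contour_integral_div[OF intS[OF s]])
    finally show "contour_integral \<gamma> (\<lambda>\<sigma>. G \<tau> \<sigma> / \<sigma>^2) / \<tau>^2 = contour_integral \<gamma> (f \<tau>)" by simp
  qed
  show "deriv (\<lambda>s. deriv (\<lambda>t. G t s) 0) 0 = deriv (\<lambda>t. deriv (\<lambda>s. G t s) 0) 0"
    using A(2) B(2) e1 e2 swap by (simp add: \<gamma>_def)
qed

lemma zero_est:
  fixes \<psi> :: "complex \<Rightarrow> complex"
  assumes holo: "\<psi> holomorphic_on ball 0 R0" and r1: "0 < r1" "r1 < R0"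
    and bnd: "\<And>z. z \<in> ball 0 R0 \<Longrightarrow> norm (\<psi> z) \<le> B"
    and z0: "\<psi> 0 = 0" and za: "\<psi> a = 0" and a: "norm a < r1" "a \<noteq> 0"
  shows "norm (deriv \<psi> 0) \<le> B * norm a / (r1 * (r1 - norm a))"
proof -
  define \<gamma> where "\<gamma> = circlepath (0::complex) r1"
  have sub: "cball 0 r1 \<subseteq> ball (0::complex) R0" using r1 by auto
  have cont: "continuous_on (cball 0 r1) \<psi>"
    using holomorphic_on_imp_continuous_on[OF holo] continuous_on_subset sub by blast
  have hol: "\<psi> holomorphic_on ball 0 r1"
    using holo by (rule holomorphic_on_subset) (use r1 in auto)
  have I1: "((\<lambda>u. \<psi> u / (u - a)) has_contour_integral 0) \<gamma>"
    using Cauchy_integral_circlepath[OF cont hol, of a] a za by (simp add: \<gamma>_def)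
  have I0: "((\<lambda>u. \<psi> u / (u - 0)) has_contour_integral 0) \<gamma>"
    using Cauchy_integral_circlepath[OF cont hol, of 0] r1 z0 by (simp add: \<gamma>_def)
  have I2: "((\<lambda>u. \<psi> u / (u - 0) ^ Suc 1) has_contour_integral (2 * pi * \<i>) / (fact 1) * (deriv ^^ 1) \<psi> 0) \<gamma>"
    unfolding \<gamma>_def by (rule Cauchy_has_contour_integral_higher_derivative_circlepath[OF cont hol]) (use r1 in simp)
  define h where "h = (\<lambda>u. (1/a) * (\<psi> u / (u - a) - \<psi> u / (u - 0)) - \<psi> u / (u - 0) ^ Suc 1)"
  have Ih: "(h has_contour_integral ((1/a) * (0 - 0) - (2 * pi * \<i>) / (fact 1) * (deriv ^^ 1) \<psi> 0)) \<gamma>"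
    unfolding h_def by (intro has_contour_integral_diff has_contour_integral_lmul I0 I1 I2)
  have B0: "0 \<le> B" using bnd[of 0] r1 by (auto intro: order_trans[OF norm_ge_zero])
  have hb: "norm (h x) \<le> B * norm a / (r1^2 * (r1 - norm a))" if x: "norm (x - 0) = r1" for x
  proof -
    have x0: "x \<noteq> 0" using x r1 by auto
    have xa: "x \<noteq> a" using x a by auto
    have "h x = a * \<psi> x / (x^2 * (x - a))"
      using x0 xa a(2) unfolding h_def by (simp add: field_simps power2_eq_square)
    then have "norm (h x) = norm a * norm (\<psi> x) / (r1^2 * norm (x - a))"
      using x by (simp add: norm_mult norm_divide norm_power)
    also have "\<dots> \<le> norm a * B / (r1^2 * (r1 - norm a))"
    proof (rule frac_le)
      show "0 \<le> norm a * B" using B0 by simp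
      show "norm a * norm (\<psi> x) \<le> norm a * B" using bnd[of x] x r1 by (auto intro: mult_left_mono)
      show "0 < r1^2 * (r1 - norm a)" using a r1 by auto
      have "r1 - norm a \<le> norm (x - a)" using x norm_triangle_ineq2[of x a] by simp
      then show "r1^2 * (r1 - norm a) \<le> r1^2 * norm (x - a)" by (simp add: mult_left_mono)
    qed
    finally show ?thesis by (simp add: mult.commute)
  qed
  have "norm ((1/a) * (0 - 0) - (2 * pi * \<i>) / (fact 1) * (deriv ^^ 1) \<psi> 0) \<le> (B * norm a / (r1^2 * (r1 - norm a))) * (2 * pi * r1)"
    using has_contour_integral_bound_circlepath[OF Ih[unfolded \<gamma>_def] _ r1(1) hb] B0 a r1
    by (simp add: \<gamma>_def)
  then have "2 * pi * norm (deriv \<psi> 0) \<le> (B * norm a / (r1^2 * (r1 - norm a))) * (2 * pi * r1)"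
    by (simp add: norm_mult)
  moreover have aux: "\<And>x y::real. 2*pi*x \<le> y*(2*pi*r1) \<Longrightarrow> x \<le> y*r1"
  proof -
    fix x y :: real assume "2*pi*x \<le> y*(2*pi*r1)"
    then have "(2*pi)*x \<le> (2*pi)*(y*r1)" by (simp add: mult_ac)
    then show "x \<le> y*r1" using pi_gt_zero by simp
  qed
  ultimately have "norm (deriv \<psi> 0) \<le> (B * norm a / (r1^2 * (r1 - norm a))) * r1"
    by blast
  also have "\<dots> = B * norm a / (r1 * (r1 - norm a))"
  proof -
    have "r1 - norm a \<noteq> 0" using a by simp
    then show ?thesis using r1 by (simp add: power2_eq_square field_simps)
  qed
  finally show ?thesis .
qed

lemma cauchy_est1:
  fixes \<psi> :: "complex \<Rightarrow> complex"
  assumes holo: "\<psi> holomorphic_on ball 0 R0" and r1: "0 < r1" "r1 < R0"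
    and bnd: "\<And>z. z \<in> ball 0 R0 \<Longrightarrow> norm (\<psi> z) \<le> B"
  shows "norm (deriv \<psi> 0) \<le> B / r1"
proof -
  have sub: "cball 0 r1 \<subseteq> ball (0::complex) R0" using r1 by auto
  have cont: "continuous_on (cball 0 r1) \<psi>"
    using holomorphic_on_imp_continuous_on[OF holo] continuous_on_subset sub by blast
  have hol: "\<psi> holomorphic_on ball 0 r1"
    using holo by (rule holomorphic_on_subset) (use r1 in auto)
  have "norm ((deriv ^^ 1) \<psi> 0) \<le> fact 1 * B / r1 ^ 1"
    by (rule Cauchy_inequality[OF hol cont r1(1)]) (use bnd r1 in auto)
  then show ?thesis by simp
qed

lemma ci_lin: "t *s a = Re t *\<^sub>R a + Im t *\<^sub>R (\<i> *s a)" for t :: complex and a :: "complex^'n"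
proof -
  have "t * a $ j = Re t *\<^sub>R a $ j + Im t *\<^sub>R (\<i> * a $ j)" for j
    by (subst complex_eq[of t]) (simp add: scaleR_conv_of_real algebra_simps)
  then show ?thesis by (simp add: vec_eq_iff vector_scalar_mult_def)
qed

lemma line_deriv:
  fixes F :: "complex^'n \<Rightarrow> complex"
  assumes FL: "(F has_derivative L) (at z)" and CL: "\<forall>h. L (\<chi> j. \<i> * h $ j) = \<i> * L h"
    and z: "q + t0 *s a = z"
  shows "((\<lambda>t. F (q + t *s a)) has_field_derivative L a) (at t0)"
proof -
  have bl: "bounded_linear L" using FL has_derivative_bounded_linear by blast
  then have lin: "linear L" by (rule bounded_linear.linear)
  have eq: "(\<lambda>t. q + t *s a) = (\<lambda>t. q + Re t *\<^sub>R a + Im t *\<^sub>R (\<i> *s a))"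
  proof
    fix t show "q + t *s a = q + Re t *\<^sub>R a + Im t *\<^sub>R (\<i> *s a)"
      by (subst ci_lin) (simp only: add.assoc)
  qed
  have D: "((\<lambda>t. q + t *s a) has_derivative (\<lambda>h. Re h *\<^sub>R a + Im h *\<^sub>R (\<i> *s a))) (at t0)"
    unfolding eq by (auto intro!: derivative_eq_intros)
  have FL': "(F has_derivative L) (at (q + t0 *s a))" using FL z by simp
  have C: "((\<lambda>t. F (q + t *s a)) has_derivative (\<lambda>h. L (Re h *\<^sub>R a + Im h *\<^sub>R (\<i> *s a)))) (at t0)"
    using has_derivative_compose[OF D FL'] by simp
  have Li: "L (\<i> *s a) = \<i> * L a" using CL by (simp add: vector_scalar_mult_def)
  have "(\<lambda>h. L (Re h *\<^sub>R a + Im h *\<^sub>R (\<i> *s a))) = (*) (L a)"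
  proof
    fix h :: complex
    have "L (Re h *\<^sub>R a + Im h *\<^sub>R (\<i> *s a)) = Re h *\<^sub>R L a + Im h *\<^sub>R (\<i> * L a)"
      using lin Li by (simp add: linear_add linear_scale)
    also have "\<dots> = (of_real (Re h) + \<i> * of_real (Im h)) * L a"
      by (simp add: scaleR_conv_of_real algebra_simps)
    also have "\<dots> = h * L a" by (metis complex_eq)
    finally show "L (Re h *\<^sub>R a + Im h *\<^sub>R (\<i> *s a)) = L a * h" by simp
  qed
  then show ?thesis using C unfolding has_field_derivative_def by simp
qed

lemma holo_point:
  assumes "holo_on F S" "z \<in> S"
  obtains L where "(F has_derivative L) (at z)" "\<forall>h. L (\<chi> j. \<i> * h $ j) = \<i> * L h"
  using assms unfolding holo_on_def by blast

lemma holo_line: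
  fixes F :: "complex^'n \<Rightarrow> complex"
  assumes H: "holo_on F S" and T: "open T" and inS: "\<And>t. t \<in> T \<Longrightarrow> q + t *s a \<in> S"
  shows "(\<lambda>t. F (q + t *s a)) holomorphic_on T"
  unfolding holomorphic_on_open[OF T]
proof
  fix t assume "t \<in> T"
  then obtain L where "(F has_derivative L) (at (q + t *s a))" "\<forall>h. L (\<chi> j. \<i> * h $ j) = \<i> * L h"
    using holo_point[OF H inS] by blast
  from line_deriv[OF this refl] show "\<exists>f'. ((\<lambda>t. F (q + t *s a)) has_field_derivative f') (at t)" by blast
qed

lemma holo_cont_on:
  fixes F :: "complex^'n \<Rightarrow> complex"
  assumes H: "holo_on F S" and "A \<subseteq> S"
  shows "continuous_on A F"
proof (rule continuous_at_imp_continuous_on, rule ballI)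
  fix z assume "z \<in> A"
  then obtain L where "(F has_derivative L) (at z)" using holo_point[OF H] assms(2) by blast
  then show "isCont F z" by (rule has_derivative_continuous)
qed

lemma cvec_expand: "cvec u = (\<Sum>j\<in>UNIV. u $ j *\<^sub>R cvec (axis j 1))"
proof -
  have "(\<Sum>j\<in>UNIV. u $ j *\<^sub>R cvec (axis j 1)) $ i = (\<Sum>j\<in>UNIV. (if j = i then complex_of_real (u$j) else 0))" for i
    unfolding sum_component by (rule sum.cong) (auto simp: cvec_def axis_def of_real_def)
  then show ?thesis by (simp add: vec_eq_iff cvec_def)
qed

lemma cvec_line: "cvec y + of_real t *s cvec b = cvec (y + t *\<^sub>R b)"
  by (simp add: vec_eq_iff cvec_def vector_scalar_mult_def)

lemma dir_linear:
  fixes F :: "complex^'n \<Rightarrow> complex"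
  assumes H: "holo_on F S" and z: "z \<in> S"
  shows "deriv (\<lambda>s. F (z + s *s cvec u)) 0 = (\<Sum>j\<in>UNIV. of_real (u $ j) * deriv (\<lambda>s. F (z + s *s cvec (axis j 1))) 0)"
proof -
  obtain L where L: "(F has_derivative L) (at z)" "\<forall>h. L (\<chi> j. \<i> * h $ j) = \<i> * L h"
    using holo_point[OF H z] by blast
  have lin: "linear L" using L(1) has_derivative_bounded_linear bounded_linear.linear by blast
  have d: "deriv (\<lambda>s. F (z + s *s a)) 0 = L a" for a
    by (rule DERIV_imp_deriv[OF line_deriv[OF L]]) simp
  have "L (cvec u) = (\<Sum>j\<in>UNIV. u $ j *\<^sub>R L (cvec (axis j 1)))"
    by (subst cvec_expand) (simp add: linear_sum[OF lin] linear_scale[OF lin])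
  then show ?thesis by (simp add: d scaleR_conv_of_real)
qed

lemma real_restrict:
  assumes g: "(g has_field_derivative D) (at (of_real t0))" and gf: "\<And>t. g (of_real t) = of_real (f t)"
  shows "(f has_real_derivative Re D) (at t0)" and "D = of_real (Re D)"
proof -
  have vd: "((\<lambda>t. g (of_real t)) has_vector_derivative D) (at t0)"
    using has_vector_derivative_real_field[OF g, of UNIV] by simp
  then have vd': "((\<lambda>t. complex_of_real (f t)) has_vector_derivative D) (at t0)" by (simp add: gf)
  from has_field_derivative_Re[OF vd'] show "(f has_real_derivative Re D) (at t0)" by simp
  from has_field_derivative_Im[OF vd'] have "((\<lambda>t. 0::real) has_real_derivative Im D) (at t0)" by simp
  then have "Im D = 0" using DERIV_const DERIV_unique by blast
  then show "D = of_real (Re D)" by (simp add: complex_eq_iff)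
qed

lemma R1:
  fixes F :: "complex^'n \<Rightarrow> complex" and V :: "real^'n \<Rightarrow> real"
  assumes H: "holo_on F S" and inS: "cvec y \<in> S" and FV: "\<forall>x. F (cvec x) = of_real (V x)"
  shows "deriv (\<lambda>s. F (cvec y + s *s cvec b)) 0 = of_real (deriv (\<lambda>t. V (y + t *\<^sub>R b)) 0)"
proof -
  obtain L where L: "(F has_derivative L) (at (cvec y))" "\<forall>h. L (\<chi> j. \<i> * h $ j) = \<i> * L h"
    using holo_point[OF H inS] by blast
  have d: "((\<lambda>s. F (cvec y + s *s cvec b)) has_field_derivative L (cvec b)) (at (of_real 0))"
    using line_deriv[OF L, of "cvec y" 0] by simp
  have gf: "F (cvec y + of_real t *s cvec b) = of_real (V (y + t *\<^sub>R b))" for t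
    by (simp add: cvec_line FV)
  note rr = real_restrict[OF d gf]
  have "deriv (\<lambda>t. V (y + t *\<^sub>R b)) 0 = Re (L (cvec b))" by (rule DERIV_imp_deriv[OF rr(1)])
  moreover have "deriv (\<lambda>s. F (cvec y + s *s cvec b)) 0 = L (cvec b)"
    using DERIV_imp_deriv[OF d] by simp
  ultimately show ?thesis using rr(2) by simp
qed

lemma crit_partial:
  assumes "critical_point V x"
  shows "partial V j x = 0"
proof -
  have D1: "((\<lambda>t. x + t *\<^sub>R axis j 1) has_derivative (\<lambda>h. h *\<^sub>R axis j 1)) (at 0)"
    by (auto intro!: derivative_eq_intros)
  have V0: "(V has_derivative (\<lambda>h. 0)) (at (x + 0 *\<^sub>R axis j 1))"
    using assms by (simp add: critical_point_def)
  have hd: "((\<lambda>t. V (x + t *\<^sub>R axis j 1)) has_derivative (\<lambda>h. 0)) (at 0)"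
    using has_derivative_compose[OF D1 V0] by simp
  then have "((\<lambda>t. V (x + t *\<^sub>R axis j 1)) has_real_derivative 0) (at 0)"
  proof -
    have e: "(\<lambda>h::real. 0::real) = (*) 0" by (rule ext) simp
    show ?thesis unfolding has_field_derivative_def e[symmetric] by (rule hd)
  qed
  then show ?thesis unfolding partial_def by (rule DERIV_imp_deriv)
qed

lemma partial_shift:
  fixes V :: "real^'n \<Rightarrow> real" and k :: "real^'n"
  assumes P: "periodic1 V" and k: "\<forall>i. k $ i \<in> \<int>"
  shows "partial V j (x + k) = partial V j x"
proof -
  have "(\<lambda>t. V (x + k + t *\<^sub>R axis j 1)) = (\<lambda>t. V (x + t *\<^sub>R axis j 1))"
  proof
    fix t
    have "V ((x + t *\<^sub>R axis j 1) + k) = V (x + t *\<^sub>R axis j 1)" using P k unfolding periodic1_def by blast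
    then show "V (x + k + t *\<^sub>R axis j 1) = V (x + t *\<^sub>R axis j 1)" by (simp add: add_ac)
  qed
  then show ?thesis unfolding partial_def by simp
qed

lemma F_periodic:
  fixes F :: "complex^'n \<Rightarrow> complex" and V :: "real^'n \<Rightarrow> real" and k :: "real^'n"
  assumes H: "holo_on F (strip \<rho>)" and FV: "\<forall>x. F (cvec x) = of_real (V x)" and P: "periodic1 V"
    and k: "\<forall>i. k $ i \<in> \<int>" and z: "z \<in> strip \<rho>"
  shows "F (z + cvec k) = F z"
proof -
  define x where "x = (\<chi> j. Re (z $ j))"
  define y where "y = (\<chi> j. Im (z $ j))"
  have zxy: "z = cvec x + \<i> *s cvec y"
    by (simp add: vec_eq_iff x_def y_def cvec_def vector_scalar_mult_def complex_eq_iff)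
  define m where "m = Max (range (\<lambda>j. \<bar>y $ j\<bar>))"
  have ym: "\<bar>y $ j\<bar> \<le> m" for j unfolding m_def by (rule Max_ge) auto
  have "m \<in> range (\<lambda>j. \<bar>y $ j\<bar>)" unfolding m_def by (rule Max_in) auto
  then obtain j0 where "m = \<bar>y $ j0\<bar>" by blast
  then have m\<rho>: "m < \<rho>" using z by (simp add: strip_def y_def)
  have m0: "0 \<le> m" using ym[of j0] by linarith
  have \<rho>0: "0 < \<rho>" using m0 m\<rho> by linarith
  define r0 where "r0 = 2*\<rho>/(\<rho>+m)"
  have r0_1: "1 < r0" using m0 m\<rho> \<rho>0 by (simp add: r0_def field_simps)
  have r0m: "r0 * m < \<rho>" using m0 m\<rho> \<rho>0 by (simp add: r0_def field_simps)
  define T where "T = {t::complex. inner \<i> t < r0} \<inter> {t. inner \<i> t > -r0}"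
  have Tim: "t \<in> T \<longleftrightarrow> \<bar>Im t\<bar> < r0" for t by (auto simp: T_def inner_complex_def)
  have oT: "open T" unfolding T_def by (intro open_Int open_halfspace_lt open_halfspace_gt)
  have cT: "connected T" unfolding T_def
    by (intro convex_connected convex_Int convex_halfspace_lt convex_halfspace_gt)
  have inS: "q + t *s cvec y \<in> strip \<rho>" if "t \<in> T" "\<forall>j. Im (q $ j) = 0" for q :: "complex^'n" and t
  proof -
    have "\<bar>Im t * y $ j\<bar> < \<rho>" for j
    proof -
      have "\<bar>Im t * y $ j\<bar> = \<bar>Im t\<bar> * \<bar>y $ j\<bar>" by (simp add: abs_mult)
      also have "\<dots> \<le> r0 * m" using Tim[of t] that(1) ym[of j] by (intro mult_mono) auto
      finally show ?thesis using r0m by linarith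
    qed
    then show ?thesis using that(2) by (simp add: strip_def vector_scalar_mult_def cvec_def)
  qed
  define f where "f = (\<lambda>t. F (cvec (x + k) + t *s cvec y) - F (cvec x + t *s cvec y))"
  have hf: "f holomorphic_on T" unfolding f_def
    by (intro holomorphic_on_diff holo_line[OF H oT] inS) (auto simp: cvec_def)
  have f0: "f w = 0" if "w \<in> \<real>" for w
  proof -
    from that obtain r where r: "w = of_real r" by (rule Reals_cases)
    have "V (x + k + r *\<^sub>R y) = V (x + r *\<^sub>R y)"
    proof -
      have e: "x + k + r *\<^sub>R y = (x + r *\<^sub>R y) + k" by (simp add: add_ac)
      show ?thesis unfolding e using P k unfolding periodic1_def by blast
    qed
    then show ?thesis unfolding f_def r cvec_line by (simp add: FV)
  qed
  have lim: "0 islimpt (\<real>::complex set)"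
  proof (unfold islimpt_approachable, intro allI impI)
    fix e :: real assume "0 < e"
    have "complex_of_real (e/2) \<in> \<real>" by simp
    moreover have "complex_of_real (e/2) \<noteq> 0 \<and> dist (complex_of_real (e/2)) 0 < e"
      using \<open>0 < e\<close> by (simp add: dist_norm)
    ultimately show "\<exists>x'::complex\<in>\<real>. x' \<noteq> 0 \<and> dist x' 0 < e" by (rule rev_bexI)
  qed
  have RT: "\<real> \<subseteq> T"
  proof
    fix w :: complex assume "w \<in> \<real>"
    then have "Im w = 0" by (simp add: complex_is_Real_iff)
    then show "w \<in> T" using Tim[of w] r0_1 by simp
  qed
  have T0: "0 \<in> T" using RT by auto
  have Ti: "\<i> \<in> T" using Tim[of \<i>] r0_1 by simp
  have f1: "f \<i> = 0"
    by (rule analytic_continuation[OF hf oT cT RT T0 lim f0 Ti])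
  have eq: "cvec (x + k) + \<i> *s cvec y = z + cvec k"
    unfolding zxy by (simp add: vec_eq_iff cvec_def vector_scalar_mult_def)
  have "F (cvec (x + k) + \<i> *s cvec y) = F (cvec x + \<i> *s cvec y)"
    using f1 unfolding f_def by simp
  then show ?thesis unfolding eq zxy[symmetric] .
qed

lemma F_bounded:
  fixes F :: "complex^'n \<Rightarrow> complex" and V :: "real^'n \<Rightarrow> real"
  assumes H: "holo_on F (strip \<rho>)" and FV: "\<forall>x. F (cvec x) = of_real (V x)" and P: "periodic1 V"
    and \<rho>: "0 < \<rho>"
  shows "bdd_above ((\<lambda>z. cmod (F z)) ` strip (3*\<rho>/4))"
proof -
  define K where "K = {z::complex^'n. \<forall>j. 0 \<le> Re (z$j) \<and> Re (z$j) \<le> 1 \<and> \<bar>Im (z$j)\<bar> \<le> 3*\<rho>/4}"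
  have clK: "closed K" unfolding K_def
    by (intro closed_Collect_all closed_Collect_conj closed_Collect_le continuous_intros)
  have bK: "bounded K"
    unfolding bounded_iff
  proof (intro exI ballI)
    fix z assume z: "z \<in> K"
    have "norm z \<le> (\<Sum>j\<in>UNIV. norm (z $ j))"
      unfolding norm_vec_def by (rule L2_set_le_sum) auto
    also have "\<dots> \<le> (\<Sum>j\<in>(UNIV::'n set). 1 + 3*\<rho>/4)"
    proof (rule sum_mono)
      fix j
      have "norm (z $ j) \<le> \<bar>Re (z$j)\<bar> + \<bar>Im (z$j)\<bar>" by (rule cmod_le)
      moreover have "0 \<le> Re (z$j)" "Re (z$j) \<le> 1" "\<bar>Im (z$j)\<bar> \<le> 3*\<rho>/4" using z unfolding K_def by auto
      ultimately show "norm (z $ j) \<le> 1 + 3*\<rho>/4" by linarith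
    qed
    finally show "norm z \<le> (\<Sum>j\<in>(UNIV::'n set). 1 + 3*\<rho>/4)" .
  qed
  have cK: "compact K" using clK bK by (simp add: compact_eq_bounded_closed)
  have KS: "K \<subseteq> strip \<rho>"
  proof
    fix z assume z: "z \<in> K"
    have "\<bar>Im (z$j)\<bar> < \<rho>" for j
    proof -
      have "\<bar>Im (z$j)\<bar> \<le> 3*\<rho>/4" using z unfolding K_def by blast
      then show ?thesis using \<rho> by linarith
    qed
    then show "z \<in> strip \<rho>" by (simp add: strip_def)
  qed
  have "compact (F ` K)" by (rule compact_continuous_image[OF holo_cont_on[OF H KS] cK])
  then obtain B where B: "\<And>z. z \<in> K \<Longrightarrow> cmod (F z) \<le> B"
    using compact_imp_bounded bounded_iff by (metis imageI)
  show ?thesis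
  proof (rule bdd_aboveI2)
    fix z :: "complex^'n" assume z: "z \<in> strip (3*\<rho>/4)"
    define k :: "real^'n" where "k = (\<chi> j. real_of_int \<lfloor>Re (z $ j)\<rfloor>)"
    have kI: "\<forall>i. k $ i \<in> \<int>" by (simp add: k_def)
    define z' where "z' = z - cvec k"
    have z'K: "z' \<in> K" unfolding K_def
    proof (intro CollectI allI)
      fix j
      have e1: "Re (z' $ j) = Re (z$j) - of_int \<lfloor>Re (z$j)\<rfloor>" and e2: "Im (z' $ j) = Im (z$j)"
        by (simp_all add: z'_def k_def cvec_def)
      have f: "of_int \<lfloor>Re (z$j)\<rfloor> \<le> Re (z$j)" "Re (z$j) < of_int (\<lfloor>Re (z$j)\<rfloor> + 1)"
        by (rule floor_correct[THEN conjunct1], rule floor_correct[THEN conjunct2])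
      have g: "\<bar>Im (z$j)\<bar> < 3*\<rho>/4" using z by (simp add: strip_def)
      show "0 \<le> Re (z' $ j) \<and> Re (z' $ j) \<le> 1 \<and> \<bar>Im (z' $ j)\<bar> \<le> 3*\<rho>/4"
        unfolding e1 e2 using f g by (intro conjI; simp; linarith)
    qed
    have "F z = F (z' + cvec k)" by (simp add: z'_def)
    also have "\<dots> = F z'" by (rule F_periodic[OF H FV P kI]) (use z'K KS in auto)
    finally show "cmod (F z) \<le> B" using B[OF z'K] by simp
  qed
qed

lemma strip_mem:
  fixes x a b :: "real^'n" and t s :: complex
  assumes a: "\<forall>j. \<bar>a$j\<bar> \<le> 1" and b: "\<forall>j. \<bar>b$j\<bar> \<le> 1" and ts: "cmod t + cmod s < r"
  shows "cvec x + t *s cvec a + s *s cvec b \<in> strip r"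
proof -
  have "\<bar>Im ((cvec x + t *s cvec a + s *s cvec b) $ j)\<bar> < r" for j
  proof -
    have e: "Im ((cvec x + t *s cvec a + s *s cvec b) $ j) = Im t * a$j + Im s * b$j"
      by (simp add: cvec_def vector_scalar_mult_def)
    have 1: "\<bar>Im t * a$j\<bar> \<le> cmod t"
    proof -
      have "\<bar>Im t * a$j\<bar> = \<bar>Im t\<bar> * \<bar>a$j\<bar>" by (simp add: abs_mult)
      also have "\<dots> \<le> \<bar>Im t\<bar> * 1" using a by (intro mult_left_mono) auto
      also have "\<dots> \<le> cmod t" using abs_Im_le_cmod by simp
      finally show ?thesis .
    qed
    have 2: "\<bar>Im s * b$j\<bar> \<le> cmod s"
    proof -
      have "\<bar>Im s * b$j\<bar> = \<bar>Im s\<bar> * \<bar>b$j\<bar>" by (simp add: abs_mult)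
      also have "\<dots> \<le> \<bar>Im s\<bar> * 1" using b by (intro mult_left_mono) auto
      also have "\<dots> \<le> cmod s" using abs_Im_le_cmod by simp
      finally show ?thesis .
    qed
    have "\<bar>Im t * a$j + Im s * b$j\<bar> \<le> \<bar>Im t * a$j\<bar> + \<bar>Im s * b$j\<bar>" by (rule abs_triangle_ineq)
    then show ?thesis unfolding e using 1 2 ts by linarith
  qed
  then show ?thesis by (simp add: strip_def)
qed

lemma G_props:
  fixes F :: "complex^'n \<Rightarrow> complex" and x a b :: "real^'n"
  assumes H: "holo_on F (strip \<rho>)" and \<rho>: "0 < \<rho>" and a: "\<forall>j. \<bar>a$j\<bar> \<le> 1" and b: "\<forall>j. \<bar>b$j\<bar> \<le> 1"
  shows "continuous_on (cball 0 (\<rho>/4) \<times> cball 0 (\<rho>/4)) (\<lambda>(t,s). F (cvec x + t *s cvec a + s *s cvec b))"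
    and "\<And>s. s \<in> cball 0 (\<rho>/4) \<Longrightarrow> (\<lambda>t. F (cvec x + t *s cvec a + s *s cvec b)) holomorphic_on ball 0 (\<rho>/4)"
    and "\<And>t. t \<in> cball 0 (\<rho>/4) \<Longrightarrow> (\<lambda>s. F (cvec x + t *s cvec a + s *s cvec b)) holomorphic_on ball 0 (\<rho>/4)"
proof -
  have mem: "cvec x + t *s cvec a + s *s cvec b \<in> strip \<rho>" if "cmod t \<le> \<rho>/4" "cmod s \<le> \<rho>/4" for t s
    by (rule strip_mem[OF a b]) (use that \<rho> in linarith)
  define f where "f = (\<lambda>p::complex\<times>complex. cvec x + fst p *s cvec a + snd p *s cvec b)"
  have f_eq: "f = (\<lambda>p. \<chi> j. cvec x $ j + fst p * cvec a $ j + snd p * cvec b $ j)"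
    by (auto simp: f_def fun_eq_iff vec_eq_iff vector_scalar_mult_def)
  have cf: "continuous_on (cball 0 (\<rho>/4) \<times> cball 0 (\<rho>/4)) f"
    unfolding f_eq by (intro continuous_intros)
  have fS: "f ` (cball 0 (\<rho>/4) \<times> cball 0 (\<rho>/4)) \<subseteq> strip \<rho>"
    using mem by (auto simp: f_def)
  have "continuous_on (cball 0 (\<rho>/4) \<times> cball 0 (\<rho>/4)) (\<lambda>p. F (f p))"
    by (rule continuous_on_compose2[OF holo_cont_on[OF H subset_refl] cf fS])
  then show "continuous_on (cball 0 (\<rho>/4) \<times> cball 0 (\<rho>/4)) (\<lambda>(t,s). F (cvec x + t *s cvec a + s *s cvec b))"
    by (simp add: f_def split_beta)
  show "(\<lambda>t. F (cvec x + t *s cvec a + s *s cvec b)) holomorphic_on ball 0 (\<rho>/4)" if s: "s \<in> cball 0 (\<rho>/4)" for s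
  proof -
    have "(\<lambda>t. F ((cvec x + s *s cvec b) + t *s cvec a)) holomorphic_on ball 0 (\<rho>/4)"
    proof (rule holo_line[OF H open_ball])
      fix t :: complex assume "t \<in> ball 0 (\<rho>/4)"
      then have "cvec x + t *s cvec a + s *s cvec b \<in> strip \<rho>" using s by (intro mem) auto
      then show "cvec x + s *s cvec b + t *s cvec a \<in> strip \<rho>" by (simp add: add_ac)
    qed
    then show ?thesis by (simp add: add_ac)
  qed
  show "(\<lambda>s. F (cvec x + t *s cvec a + s *s cvec b)) holomorphic_on ball 0 (\<rho>/4)" if t: "t \<in> cball 0 (\<rho>/4)" for t
  proof (rule holo_line[OF H open_ball])
    fix s :: complex assume "s \<in> ball 0 (\<rho>/4)"
    then show "cvec x + t *s cvec a + s *s cvec b \<in> strip \<rho>" using t by (intro mem) auto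
  qed
qed


lemma axis_le1: "\<forall>j. \<bar>axis i (1::real) $ j\<bar> \<le> 1"
  by (simp add: axis_def)

lemma hess_row_bound:
  fixes F :: "complex^'n \<Rightarrow> complex" and V :: "real^'n \<Rightarrow> real" and x0 \<delta> :: "real^'n"
  assumes H: "holo_on F (strip \<rho>)" and \<rho>: "0 < \<rho>" and FV: "\<forall>x. F (cvec x) = of_real (V x)"
    and Mb: "\<And>z. z \<in> strip (3*\<rho>/4) \<Longrightarrow> cmod (F z) \<le> M"
    and crit0: "\<And>j. partial V j x0 = 0" and crit1: "\<And>j. partial V j (x0 + \<delta>) = 0"
    and \<delta>0: "\<delta> \<noteq> 0"
  shows "\<bar>(hessian V x0 *v ((1 / norm \<delta>) *\<^sub>R \<delta>)) $ i\<bar>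
           \<le> (if norm \<delta> < \<rho>/16 then 512 * M * norm \<delta> / \<rho>^3 else 32 * M / \<rho>^2)"
proof -
  define a where "a = norm \<delta>"
  have a0: "0 < a" using \<delta>0 by (simp add: a_def)
  define u where "u = (1 / a) *\<^sub>R \<delta>"
  have nu: "norm u = 1" using a0 by (simp add: u_def a_def)
  have ub: "\<forall>j. \<bar>u$j\<bar> \<le> 1" using component_le_norm_cart[of u] nu by simp
  have au: "x0 + a *\<^sub>R u = x0 + \<delta>" using a0 by (simp add: u_def)
  define R where "R = \<rho>/4"
  have R0: "0 < R" using \<rho> by (simp add: R_def)
  define p where "p = cvec x0"
  define e where "e = (\<lambda>j. cvec (axis j (1::real)) :: complex^'n)"
  define Gi where "Gi = (\<lambda>t s. F (p + t *s e i + s *s cvec u))"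
  define \<Psi> where "\<Psi> = (\<lambda>s. deriv (\<lambda>t. Gi t s) 0)"
  define \<Phi> where "\<Phi> = (\<lambda>t. deriv (\<lambda>s. Gi t s) 0)"
  define Gij where "Gij = (\<lambda>j t s. F (p + t *s e i + s *s e j))"
  define \<Phi>j where "\<Phi>j = (\<lambda>j t. deriv (\<lambda>s. Gij j t s) 0)"
  have GPi: "continuous_on (cball 0 R \<times> cball 0 R) (\<lambda>(t,s). Gi t s)"
      "\<And>s. s \<in> cball 0 R \<Longrightarrow> (\<lambda>t. Gi t s) holomorphic_on ball 0 R"
      "\<And>t. t \<in> cball 0 R \<Longrightarrow> (\<lambda>s. Gi t s) holomorphic_on ball 0 R"
    using G_props[where x=x0, OF H \<rho> axis_le1[of i] ub]
    unfolding R_def[symmetric] p_def[symmetric] e_def Gi_def by auto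
  note MPi = mixed_partials[of R Gi, OF R0 GPi]
  have GPj: "continuous_on (cball 0 R \<times> cball 0 R) (\<lambda>(t,s). Gij j t s)"
      "\<And>s. s \<in> cball 0 R \<Longrightarrow> (\<lambda>t. Gij j t s) holomorphic_on ball 0 R"
      "\<And>t. t \<in> cball 0 R \<Longrightarrow> (\<lambda>s. Gij j t s) holomorphic_on ball 0 R" for j
    using G_props[where x=x0, OF H \<rho> axis_le1[of i] axis_le1[of j]]
    unfolding R_def[symmetric] p_def[symmetric] e_def Gij_def by auto
  have MPj: "(\<Phi>j j) holomorphic_on ball 0 R" for j
    unfolding \<Phi>j_def by (rule mixed_partials(2)[OF R0 GPj(1) GPj(2) GPj(3)])
  have holPsi: "\<Psi> holomorphic_on ball 0 R" using MPi(1) by (simp add: \<Psi>_def)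
  have dPsi: "deriv \<Psi> 0 = deriv \<Phi> 0" using MPi(3) by (simp add: \<Psi>_def \<Phi>_def)
  have bPsi: "cmod (\<Psi> s) \<le> M / R" if s: "s \<in> ball 0 R" for s
  proof -
    have sc: "s \<in> cball 0 R" using s by auto
    have "norm ((deriv ^^ 1) (\<lambda>t. Gi t s) 0) \<le> fact 1 * M / R ^ 1"
    proof (rule Cauchy_inequality[OF GPi(2)[OF sc] cont_slice1[OF GPi(1) sc] R0])
      fix t :: complex assume t: "norm (0 - t) = R"
      have "p + t *s e i + s *s cvec u \<in> strip (3*\<rho>/4)"
        unfolding p_def e_def
        by (rule strip_mem[OF axis_le1 ub]) (use t s \<rho> in \<open>auto simp: R_def\<close>)
      then show "norm (Gi t s) \<le> M" unfolding Gi_def by (rule Mb)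
    qed
    then show ?thesis by (simp add: \<Psi>_def)
  qed
  have Psi_real: "\<Psi> (of_real r) = of_real (partial V i (x0 + r *\<^sub>R u))" for r
  proof -
    have "(\<lambda>t. Gi t (of_real r)) = (\<lambda>t. F (cvec (x0 + r *\<^sub>R u) + t *s cvec (axis i 1)))"
    proof
      fix t
      have "p + t *s e i + of_real r *s cvec u = (cvec x0 + of_real r *s cvec u) + t *s cvec (axis i 1)"
        by (simp add: p_def e_def add_ac)
      then show "Gi t (of_real r) = F (cvec (x0 + r *\<^sub>R u) + t *s cvec (axis i 1))"
        by (simp add: Gi_def cvec_line)
    qed
    then have "\<Psi> (of_real r) = deriv (\<lambda>t. F (cvec (x0 + r *\<^sub>R u) + t *s cvec (axis i 1))) 0"
      by (simp add: \<Psi>_def)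
    also have "\<dots> = of_real (deriv (\<lambda>t. V (x0 + r *\<^sub>R u + t *\<^sub>R axis i 1)) 0)"
      by (rule R1[OF H _ FV]) (simp add: strip_def cvec_def \<rho>)
    finally show ?thesis by (simp add: partial_def)
  qed
  have Psi0: "\<Psi> 0 = 0" using Psi_real[of 0] crit0 by simp
  have Psia: "\<Psi> (of_real a) = 0" using Psi_real[of a] crit1 au by simp
  have Phi_sum: "\<Phi> t = (\<Sum>j\<in>UNIV. of_real (u $ j) * \<Phi>j j t)" if t: "t \<in> ball 0 R" for t
  proof -
    have tS: "p + t *s e i \<in> strip \<rho>"
      using strip_mem[OF axis_le1[of i] axis_le1[of i], of t 0 \<rho> x0] t \<rho>
      by (simp add: p_def e_def R_def)
    show ?thesis
      unfolding \<Phi>_def \<Phi>j_def Gi_def Gij_def e_def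
      by (rule dir_linear[OF H tS[unfolded e_def]])
  qed
  have dPhij: "(\<Phi>j j has_field_derivative deriv (\<Phi>j j) 0) (at 0)" for j
    by (rule holomorphic_derivI[OF MPj open_ball]) (simp add: R0)
  have "((\<lambda>t. \<Sum>j\<in>UNIV. of_real (u $ j) * \<Phi>j j t) has_field_derivative
          (\<Sum>j\<in>UNIV. of_real (u $ j) * deriv (\<Phi>j j) 0)) (at 0)"
    by (intro DERIV_sum DERIV_cmult dPhij)
  then have "(\<Phi> has_field_derivative (\<Sum>j\<in>UNIV. of_real (u $ j) * deriv (\<Phi>j j) 0)) (at 0)"
    by (rule has_field_derivative_transform_within_open[OF _ open_ball[of 0 R]]) (use R0 Phi_sum in auto)
  then have dPhi: "deriv \<Phi> 0 = (\<Sum>j\<in>UNIV. of_real (u $ j) * deriv (\<Phi>j j) 0)"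
    by (rule DERIV_imp_deriv)
  have Hij: "hessian V x0 $ i $ j = Re (deriv (\<Phi>j j) 0)" for j
  proof -
    have gf: "\<Phi>j j (of_real t) = of_real (partial V j (x0 + t *\<^sub>R axis i 1))" for t
    proof -
      have "\<Phi>j j (of_real t) = deriv (\<lambda>s. F (cvec (x0 + t *\<^sub>R axis i 1) + s *s cvec (axis j 1))) 0"
        by (simp add: \<Phi>j_def Gij_def p_def e_def cvec_line)
      also have "\<dots> = of_real (deriv (\<lambda>s. V (x0 + t *\<^sub>R axis i 1 + s *\<^sub>R axis j 1)) 0)"
        by (rule R1[OF H _ FV]) (simp add: strip_def cvec_def \<rho>)
      finally show ?thesis by (simp add: partial_def)
    qed
    have "((\<lambda>t. partial V j (x0 + t *\<^sub>R axis i 1)) has_real_derivative Re (deriv (\<Phi>j j) 0)) (at 0)"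
    proof -
      have d0: "(\<Phi>j j has_field_derivative deriv (\<Phi>j j) 0) (at (of_real 0))" using dPhij by simp
      show ?thesis by (rule real_restrict(1)[OF d0 gf])
    qed
    then have dd: "deriv (\<lambda>t. partial V j (x0 + t *\<^sub>R axis i 1)) 0 = Re (deriv (\<Phi>j j) 0)"
      by (rule DERIV_imp_deriv)
    have "partial (partial V j) i x0 = deriv (\<lambda>t. partial V j (x0 + t *\<^sub>R axis i 1)) 0"
      by (rule partial_def)
    then show ?thesis unfolding hessian_def using dd by simp
  qed
  have Hu: "(hessian V x0 *v u) $ i = Re (deriv \<Psi> 0)"
  proof -
    have "(hessian V x0 *v u) $ i = (\<Sum>j\<in>UNIV. hessian V x0 $ i $ j * u $ j)"
      by (simp add: matrix_vector_mult_def)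
    also have "\<dots> = (\<Sum>j\<in>UNIV. Re (of_real (u $ j) * deriv (\<Phi>j j) 0))"
      by (simp add: Hij mult.commute)
    also have "\<dots> = Re (deriv \<Psi> 0)"
      by (simp add: dPsi dPhi Re_sum)
    finally show ?thesis .
  qed
  have HuB: "\<bar>(hessian V x0 *v u) $ i\<bar> \<le> cmod (deriv \<Psi> 0)"
    unfolding Hu by (rule abs_Re_le_cmod)
  have M0: "0 \<le> M"
  proof -
    have "0 \<le> M / R" using bPsi[of 0] R0 norm_ge_zero order_trans by (metis centre_in_ball)
    then show ?thesis using R0 by (simp add: zero_le_divide_iff)
  qed
  have r1: "0 < \<rho>/8" "\<rho>/8 < R" using \<rho> by (auto simp: R_def)
  have bound: "cmod (deriv \<Psi> 0) \<le> (if a < \<rho>/16 then 512 * M * a / \<rho>^3 else 32 * M / \<rho>^2)"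
  proof (cases "a < \<rho>/16")
    case True
    have "cmod (deriv \<Psi> 0) \<le> M / R * cmod (of_real a) / (\<rho>/8 * (\<rho>/8 - cmod (of_real a)))"
      by (rule zero_est[OF holPsi r1 bPsi Psi0 Psia]) (use True a0 \<rho> in auto)
    also have "\<dots> = (4 * M * a / \<rho>) / (\<rho>/8 * (\<rho>/8 - a))"
      using a0 by (simp add: R_def)
    also have "\<dots> \<le> (4 * M * a / \<rho>) / (\<rho>/8 * (\<rho>/16))"
    proof (rule divide_left_mono)
      show "\<rho>/8 * (\<rho>/16) \<le> \<rho>/8 * (\<rho>/8 - a)" using True \<rho> by (intro mult_left_mono) auto
      show "0 \<le> 4 * M * a / \<rho>" using M0 a0 \<rho> by simp
      show "0 < \<rho>/8 * (\<rho>/8 - a) * (\<rho>/8 * (\<rho>/16))" using True \<rho> by simp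
    qed
    also have "\<dots> = 512 * M * a / \<rho>^3"
      using \<rho> by (simp add: field_simps power3_eq_cube)
    finally show ?thesis using True by simp
  next
    case False
    have "cmod (deriv \<Psi> 0) \<le> M / R / (\<rho>/8)"
      by (rule cauchy_est1[OF holPsi r1 bPsi])
    also have "\<dots> = 32 * M / \<rho>^2" using \<rho> by (simp add: R_def field_simps power2_eq_square)
    finally show ?thesis using False by simp
  qed
  have ue: "u = (1 / norm \<delta>) *\<^sub>R \<delta>" by (simp add: u_def a_def)
  show ?thesis using order_trans[OF HuB bound] unfolding ue a_def .
qed


lemma final_arith:
  fixes X M a \<rho> d \<beta> :: real
  assumes X0: "0 \<le> X" and M0: "0 \<le> M" and a0: "0 < a" and \<rho>: "0 < \<rho>" and d: "0 < d"
    and h: "1 \<le> X * (d * \<beta>)"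
    and \<beta>: "\<beta> = (if a < \<rho>/16 then 512 * M * a / \<rho>^3 else 32 * M / \<rho>^2)"
  shows "\<rho>^3 / (512 * d) / (X * (1 + M)) \<le> a"
proof -
  have XMa: "\<rho>^3 / (512 * d) \<le> X * M * a"
  proof (cases "a < \<rho>/16")
    case True
    then have "1 \<le> (X * M * a) * (512 * d / \<rho>^3)" using h \<beta> by (simp add: field_simps)
    then show ?thesis using \<rho> d by (simp add: field_simps)
  next
    case False
    then have "1 \<le> (X * M) * (32 * d / \<rho>^2)" using h \<beta> by (simp add: field_simps)
    then have 1: "\<rho>^2 / (32 * d) \<le> X * M" using \<rho> d by (simp add: field_simps)
    have "\<rho>^3 / (512 * d) = (\<rho>/16) * (\<rho>^2 / (32 * d))" by (simp add: field_simps power2_eq_square power3_eq_cube)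
    also have "\<dots> \<le> a * (X * M)" using False 1 \<rho> d by (intro mult_mono) auto
    finally show ?thesis by (simp add: mult_ac)
  qed
  have "X * M * a \<le> X * (1 + M) * a" using X0 a0 by (intro mult_right_mono mult_left_mono) auto
  with XMa have c: "\<rho>^3 / (512 * d) \<le> X * (1 + M) * a" by linarith
  have "0 < \<rho>^3 / (512 * d)" using \<rho> d by simp
  then have pos: "0 < X * (1 + M)" using c a0
    by (metis less_le_trans mult_le_0_iff not_le order_less_imp_le)
  have "\<rho>^3 / (512 * d) \<le> a * (X * (1 + M))" using c by (simp add: mult_ac)
  then show ?thesis by (subst pos_divide_le_eq[OF pos])
qed

theorem lemma7p1:
  fixes \<rho> :: real
  assumes "0 < \<rho>" and "\<rho> \<le> 1"
  shows "\<exists>c>0. \<forall>(V :: real^'n \<Rightarrow> real) (F :: complex^'n \<Rightarrow> complex) x0 x1.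
           holo_on F (strip \<rho>)
         \<and> (\<forall>x. F (cvec x) = complex_of_real (V x))
         \<and> periodic1 V
         \<and> critical_point V x0 \<and> critical_point V x1
         \<and> \<not> (\<forall>i. x0 $ i - x1 $ i \<in> \<int>)
         \<and> invertible (hessian V x0)
         \<longrightarrow> torus_dist x0 x1 \<ge>
               c / (onorm (\<lambda>v. matrix_inv (hessian V x0) *v v) * (1 + supnorm F \<rho>))"
proof -
  note \<rho> = assms(1)
  define d where "d = real CARD('n)"
  have d0: "0 < d" by (simp add: d_def)
  define c where "c = \<rho>^3 / (512 * d)"
  have c0: "0 < c" using \<rho> d0 by (simp add: c_def)
  show ?thesis
  proof (rule exI[of _ c], intro conjI c0 allI impI)
    fix V :: "real^'n \<Rightarrow> real" and F :: "complex^'n \<Rightarrow> complex" and x0 x1 :: "real^'n"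
    assume A: "holo_on F (strip \<rho>)
         \<and> (\<forall>x. F (cvec x) = complex_of_real (V x))
         \<and> periodic1 V
         \<and> critical_point V x0 \<and> critical_point V x1
         \<and> \<not> (\<forall>i. x0 $ i - x1 $ i \<in> \<int>)
         \<and> invertible (hessian V x0)"
    then have H: "holo_on F (strip \<rho>)" and FV: "\<forall>x. F (cvec x) = complex_of_real (V x)"
      and P: "periodic1 V" and C0: "critical_point V x0" and C1: "critical_point V x1"
      and NI: "\<not> (\<forall>i. x0 $ i - x1 $ i \<in> \<int>)" and INV: "invertible (hessian V x0)"
      by blast+
    define M where "M = supnorm F \<rho>"
    define Hm where "Hm = hessian V x0"
    define X where "X = onorm (\<lambda>v. matrix_inv Hm *v v)"
    have bdd: "bdd_above ((\<lambda>z. cmod (F z)) ` strip (3*\<rho>/4))" by (rule F_bounded[OF H FV P \<rho>])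
    have Mb: "cmod (F z) \<le> M" if "z \<in> strip (3*\<rho>/4)" for z
      unfolding M_def supnorm_def by (rule cSUP_upper[OF that bdd])
    have M0: "0 \<le> M"
    proof -
      have "(0::complex^'n) \<in> strip (3*\<rho>/4)" using \<rho> by (simp add: strip_def)
      then show ?thesis using Mb norm_ge_zero order_trans by blast
    qed
    have crit0: "partial V j x0 = 0" for j by (rule crit_partial[OF C0])
    have inv: "matrix_inv Hm ** Hm = mat 1"
    proof -
      have "\<exists>A'. Hm ** A' = mat 1 \<and> A' ** Hm = mat 1" using INV by (simp add: Hm_def invertible_def)
      then have "Hm ** matrix_inv Hm = mat 1 \<and> matrix_inv Hm ** Hm = mat 1"
        unfolding matrix_inv_def by (rule someI_ex)
      then show ?thesis by blast
    qed
    have blX: "bounded_linear (\<lambda>v. matrix_inv Hm *v v)" by simp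
    have X0: "0 \<le> X" unfolding X_def by (rule onorm_pos_le[OF blX])
    have key: "c / (X * (1 + M)) \<le> norm (x0 - x1 - k)" if k: "\<forall>i. k $ i \<in> \<int>" for k :: "real^'n"
    proof -
      define \<delta> where "\<delta> = x1 + k - x0"
      have \<delta>0: "\<delta> \<noteq> 0"
      proof
        assume "\<delta> = 0"
        then have "x0 $ i - x1 $ i = k $ i" for i by (simp add: \<delta>_def vec_eq_iff algebra_simps)
        then show False using NI k by simp
      qed
      have crit1: "partial V j (x0 + \<delta>) = 0" for j
      proof -
        have "x0 + \<delta> = x1 + k" by (simp add: \<delta>_def)
        then show ?thesis using partial_shift[OF P k] crit_partial[OF C1] by simp
      qed
      define a where "a = norm \<delta>"
      have a0: "0 < a" using \<delta>0 by (simp add: a_def)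
      define u where "u = (1 / a) *\<^sub>R \<delta>"
      have nu: "norm u = 1" using a0 by (simp add: u_def a_def)
      define \<beta> where "\<beta> = (if a < \<rho>/16 then 512 * M * a / \<rho>^3 else 32 * M / \<rho>^2)"
      have rows: "\<bar>(Hm *v u) $ i\<bar> \<le> \<beta>" for i
        using hess_row_bound[OF H \<rho> FV Mb crit0 crit1 \<delta>0, of i]
        unfolding Hm_def u_def \<beta>_def a_def by simp
      have "norm (Hm *v u) \<le> (\<Sum>i\<in>UNIV. \<bar>(Hm *v u) $ i\<bar>)" by (rule norm_le_l1_cart)
      also have "\<dots> \<le> of_nat (card (UNIV::'n set)) * \<beta>" by (rule sum_bounded_above) (use rows in auto)
      finally have nH: "norm (Hm *v u) \<le> d * \<beta>" by (simp add: d_def)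
      have "matrix_inv Hm *v (Hm *v u) = u" by (simp add: matrix_vector_mul_assoc inv)
      then have "1 \<le> X * norm (Hm *v u)"
        using onorm[OF blX, of "Hm *v u"] nu by (simp add: X_def)
      also have "\<dots> \<le> X * (d * \<beta>)" using nH X0 by (rule mult_left_mono)
      finally have h: "1 \<le> X * (d * \<beta>)" .
      have "c / (X * (1 + M)) \<le> a"
        unfolding c_def by (rule final_arith[OF X0 M0 a0 \<rho> d0 h \<beta>_def])
      moreover have "norm (x0 - x1 - k) = a"
        by (simp add: a_def \<delta>_def norm_minus_commute algebra_simps)
      ultimately show ?thesis by simp
    qed
    show "torus_dist x0 x1 \<ge> c / (onorm (\<lambda>v. matrix_inv (hessian V x0) *v v) * (1 + supnorm F \<rho>))"
      unfolding torus_dist_def X_def[symmetric, unfolded Hm_def] M_def[symmetric]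
    proof (rule cInf_greatest)
      have "norm (x0 - x1 - 0) \<in> {norm (x0 - x1 - k) |k. \<forall>i. k $ i \<in> \<int>}"
        by (rule CollectI, rule exI[of _ "0::real^'n"]) simp
      then show "{norm (x0 - x1 - k) |k. \<forall>i. k $ i \<in> \<int>} \<noteq> {}" by blast
      fix r assume "r \<in> {norm (x0 - x1 - k) |k. \<forall>i. k $ i \<in> \<int>}"
      then obtain k :: "real^'n" where "r = norm (x0 - x1 - k)" "\<forall>i. k $ i \<in> \<int>" by blast
      then show "c / (X * (1 + M)) \<le> r" using key by blast
    qed
  qed
qed

end
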